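(* Let $k>d\ge1$ be integers, $G$ a finite abelian group, $A\subseteq G$, $\delta=|A|/|G|$, and let $F$ be any $(d+1)$-simple $k$-uniform hypergraph. Then $$\big|t(F,\Gamma^{(k)}_A)-\delta^{e(F)}\big|\le e(F)\,\|\Gamma^{(d+1)}_A-\delta\|_{\square^{d+1}_d}\le e(F)\,\|A-\delta\|_{U^{d+1}}.$$
   Context: $\Gamma^{(m)}_A:G^m\to\{0,1\}$ is $\Gamma^{(m)}_A(x_1,\dots,x_m)=A(x_1+\dots+x_m)$ (sets identified with indicator functions). For a $k$-uniform hypergraph $F$ whose edges are $k$-element subsets of $V(F)$, $t(F,\Gamma^{(k)}_A)=\mathbb{E}_{\mathbf{x}\in G^{V(F)}}\prod_{e\in E(F)}A(\sum_{v\in e}x_v)$. $F$ is $(d+1)$-simple if each edge $e$ contains a set of $d+1$ vertices not contained in any other edge. For $g:G^{d+1}\to\mathbb{R}$, $\|g\|_{\square^{d+1}_d}=\max|\mathbb{E}_{\mathbf{x}\in G^{d+1}}[g(\mathbf{x})\prod_{B\in\binom{[d+1]}{d}}S_B(\mathbf{x}_B)]|$ over subsets $S_B\subseteq G^B$. $\|f\|_{U^{m}}=\big(\mathbb{E}_{x,h_1,\dots,h_m}\prod_{\omega\in\{0,1\}^m}f(x+\sum_i\omega_ih_i)\big)^{1/2^m}$. *)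

theory Defs
  imports Complex_Main "HOL-Library.FuncSet"
begin

definition avg :: "'a set \<Rightarrow> ('a \<Rightarrow> real) \<Rightarrow> real" where
  "avg S f = (\<Sum>x\<in>S. f x) / real (card S)"

definition ind :: "'a set \<Rightarrow> 'a \<Rightarrow> real" where
  "ind A x = (if x \<in> A then 1 else 0)"

definition density :: "'g::finite set \<Rightarrow> real" where
  "density A = real (card A) / real (card (UNIV :: 'g set))"

definition cube :: "nat \<Rightarrow> (nat \<Rightarrow> 'g::finite) set" where
  "cube m = ({1..m} \<rightarrow>\<^sub>E (UNIV :: 'g set))"

definition Gamma :: "nat \<Rightarrow> 'g::{finite,comm_monoid_add} set \<Rightarrow> (nat \<Rightarrow> 'g) \<Rightarrow> real" where
  "Gamma m A x = ind A (\<Sum>i\<in>{1..m}. x i)"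

definition hom_density :: "'v set \<Rightarrow> 'v set set \<Rightarrow> 'g::{finite,comm_monoid_add} set \<Rightarrow> real" where
  "hom_density V E A =
     avg (V \<rightarrow>\<^sub>E (UNIV :: 'g set)) (\<lambda>x. \<Prod>e\<in>E. ind A (\<Sum>v\<in>e. x v))"

definition uniform_hypergraph :: "nat \<Rightarrow> 'v set \<Rightarrow> 'v set set \<Rightarrow> bool" where
  "uniform_hypergraph k V E \<longleftrightarrow> finite V \<and> (\<forall>e\<in>E. e \<subseteq> V \<and> card e = k)"

definition simple_hypergraph :: "nat \<Rightarrow> 'v set set \<Rightarrow> bool" where
  "simple_hypergraph r E \<longleftrightarrow>
     (\<forall>e\<in>E. \<exists>S. S \<subseteq> e \<and> card S = r \<and> (\<forall>e'\<in>E. e' \<noteq> e \<longrightarrow> \<not> S \<subseteq> e'))"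

definition box_norm :: "nat \<Rightarrow> ((nat \<Rightarrow> 'g::finite) \<Rightarrow> real) \<Rightarrow> real" where
  "box_norm d g = Max ((\<lambda>S. \<bar>avg (cube (d+1))
        (\<lambda>x. g x * (\<Prod>B\<in>{B. B \<subseteq> {1..d+1} \<and> card B = d}. ind (S B) (restrict x B)))\<bar>)
      ` {S. \<forall>B. B \<subseteq> {1..d+1} \<and> card B = d \<longrightarrow> S B \<subseteq> (B \<rightarrow>\<^sub>E (UNIV :: 'g set))})"

text \<open>Gowers U^m norm; omega \<in> {0,1}^m identified with the subset {i. omega_i = 1} of {1..m}.\<close>
definition gowers_norm :: "nat \<Rightarrow> ('g::{finite,ab_group_add} \<Rightarrow> real) \<Rightarrow> real" where
  "gowers_norm m f = root (2^m)
     (avg (UNIV \<times> cube m)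
        (\<lambda>(x, h). \<Prod>\<omega>\<in>Pow {1..m}. f (x + (\<Sum>i\<in>\<omega>. h i))))"

end

theory Submission imports Defs begin

lemma avg_add: "avg S (\<lambda>x. f x + g x) = avg S f + avg S g"
  unfolding avg_def by (simp add: sum.distrib add_divide_distrib)
lemma avg_diff: "avg S (\<lambda>x. f x - g x) = avg S f - avg S g"
  unfolding avg_def by (simp add: sum_subtractf diff_divide_distrib)
lemma avg_cmult: "avg S (\<lambda>x. c * f x) = c * avg S f"
  unfolding avg_def by (simp add: sum_distrib_left)
lemma avg_multc: "avg S (\<lambda>x. f x * c) = avg S f * c"
  unfolding avg_def by (simp add: sum_distrib_right)
lemma avg_const: "finite S \<Longrightarrow> S \<noteq> {} \<Longrightarrow> avg S (\<lambda>x. c) = c"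
  unfolding avg_def by simp
lemma avg_mono: "(\<And>x. x \<in> S \<Longrightarrow> f x \<le> g x) \<Longrightarrow> avg S f \<le> avg S g"
  unfolding avg_def by (intro divide_right_mono sum_mono) auto
lemma avg_cong: "(\<And>x. x \<in> S \<Longrightarrow> f x = g x) \<Longrightarrow> avg S f = avg S g"
  unfolding avg_def by (simp cong: sum.cong)
lemma avg_abs: "\<bar>avg S f\<bar> \<le> avg S (\<lambda>x. \<bar>f x\<bar>)"
  unfolding avg_def by (simp add: abs_divide divide_right_mono sum_abs)
lemma avg_nonneg: "(\<And>x. x \<in> S \<Longrightarrow> 0 \<le> f x) \<Longrightarrow> 0 \<le> avg S f"
  unfolding avg_def by (simp add: sum_nonneg)
lemma avg_swap: "avg S (\<lambda>x. avg T (\<lambda>y. F x y)) = avg T (\<lambda>y. avg S (\<lambda>x. F x y))"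
  unfolding avg_def by (simp add: sum_divide_distrib[symmetric] sum.swap[of _ S T])
lemma avg_times: "finite S \<Longrightarrow> finite T \<Longrightarrow>
   avg (S \<times> T) (\<lambda>(x,y). F x y) = avg S (\<lambda>x. avg T (\<lambda>y. F x y))"
  unfolding avg_def
  by (simp add: sum.cartesian_product[symmetric] card_cartesian_product sum_divide_distrib[symmetric])

lemma avg_le_const: "finite S \<Longrightarrow> S \<noteq> {} \<Longrightarrow> (\<And>x. x \<in> S \<Longrightarrow> \<bar>f x\<bar> \<le> c) \<Longrightarrow> \<bar>avg S f\<bar> \<le> c"
proof -
  assume a: "finite S" "S \<noteq> {}" "\<And>x. x \<in> S \<Longrightarrow> \<bar>f x\<bar> \<le> c"
  have "\<bar>avg S f\<bar> \<le> avg S (\<lambda>x. \<bar>f x\<bar>)" by (rule avg_abs)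
  also have "\<dots> \<le> avg S (\<lambda>x. c)" by (rule avg_mono) (use a in auto)
  also have "\<dots> = c" using a by (simp add: avg_const)
  finally show ?thesis .
qed

lemma jensen2:
  assumes "finite S" "S \<noteq> {}"
  shows "(avg S f)^2 \<le> avg S (\<lambda>x. (f x)^2)"
proof -
  define m where "m = avg S f"
  have "0 \<le> avg S (\<lambda>x. (f x - m)^2)" by (rule avg_nonneg) auto
  also have "avg S (\<lambda>x. (f x - m)^2) = avg S (\<lambda>x. (f x)^2 - 2 * m * f x + m^2)"
    by (rule avg_cong) (simp add: power2_eq_square algebra_simps)
  also have "\<dots> = avg S (\<lambda>x. (f x)^2) - 2 * m * m + m^2"
    using assms by (simp add: avg_add avg_diff avg_cmult avg_const m_def)
  finally show ?thesis by (simp add: m_def power2_eq_square)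
qed

lemma jensen_pow:
  assumes "finite S" "S \<noteq> {}"
  shows "(avg S f)^(2^k) \<le> avg S (\<lambda>x. (f x)^(2^k))"
proof (induction k arbitrary: f)
  case 0 then show ?case by simp
next
  case (Suc k)
  have "(avg S f)^(2^Suc k) = ((avg S f)^2)^(2^k)" by (simp add: power_mult[symmetric] mult.commute)
  also have "\<dots> \<le> (avg S (\<lambda>x. (f x)^2))^(2^k)"
    by (rule power_mono[OF jensen2[OF assms]]) simp
  also have "\<dots> \<le> avg S (\<lambda>x. ((f x)^2)^(2^k))" by (rule Suc.IH)
  also have "\<dots> = avg S (\<lambda>x. (f x)^(2^Suc k))" by (simp add: power_mult[symmetric] mult.commute)
  finally show ?case .
qed


lemma avg_shift: "avg (UNIV::'g::{finite,ab_group_add} set) (\<lambda>x. F (x + y)) = avg UNIV F"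
proof -
  have "(\<Sum>x\<in>UNIV. F (x + y)) = (\<Sum>x\<in>UNIV. F x)"
    by (rule sum.reindex_bij_witness[where i="\<lambda>x. x - y" and j="\<lambda>x. x + y"]) auto
  then show ?thesis unfolding avg_def by simp
qed

lemma sq_avg: "(avg (UNIV::'g::{finite,ab_group_add} set) \<Phi>)^2
   = avg UNIV (\<lambda>y. avg UNIV (\<lambda>h. \<Phi> y * \<Phi> (y + h)))"
proof -
  have "(avg (UNIV::'g set) \<Phi>)^2 = avg UNIV (\<lambda>y. \<Phi> y * avg UNIV \<Phi>)"
    by (simp add: avg_multc power2_eq_square)
  also have "\<dots> = avg UNIV (\<lambda>y. avg UNIV (\<lambda>h. \<Phi> y * \<Phi> (y + h)))"
    using avg_shift[of \<Phi>] by (simp add: avg_cmult add.commute)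
  finally show ?thesis .
qed

lemma finite_cube: "finite (cube m :: (nat \<Rightarrow> 'g::finite) set)"
  unfolding cube_def by (rule finite_PiE) auto
lemma cube_ne: "(cube m :: (nat \<Rightarrow> 'g::finite) set) \<noteq> {}"
  unfolding cube_def by (simp add: PiE_eq_empty_iff)
lemma cube_0: "cube 0 = {\<lambda>_. undefined}"
  unfolding cube_def by auto

lemma sum_cube_Suc: "(\<Sum>x\<in>(cube (Suc m) :: (nat \<Rightarrow> 'g::finite) set). F x)
   = (\<Sum>x\<in>cube m. \<Sum>y\<in>UNIV. F (x(Suc m := y)))"
proof -
  have "(\<Sum>x\<in>(cube (Suc m) :: (nat \<Rightarrow> 'g::finite) set). F x)
     = (\<Sum>p\<in>cube m \<times> UNIV. F ((fst p)(Suc m := snd p)))"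
    by (rule sum.reindex_bij_witness[where i="\<lambda>p. (fst p)(Suc m := snd p)"
        and j="\<lambda>x. (x(Suc m := undefined), x (Suc m))"])
       (auto simp: cube_def PiE_def extensional_def fun_eq_iff)
  also have "\<dots> = (\<Sum>x\<in>cube m. \<Sum>y\<in>UNIV. F (x(Suc m := y)))"
    by (simp add: sum.cartesian_product split_beta)
  finally show ?thesis .
qed

lemma card_cube_Suc: "card (cube (Suc m) :: (nat \<Rightarrow> 'g::finite) set) = card (cube m :: (nat \<Rightarrow> 'g) set) * card (UNIV::'g set)"
  using sum_cube_Suc[where F="\<lambda>_. 1::nat" and m=m] by simp

lemma avg_cube_Suc: "avg (cube (Suc m) :: (nat \<Rightarrow> 'g::finite) set) F
   = avg (cube m) (\<lambda>x. avg UNIV (\<lambda>y. F (x(Suc m := y))))"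
  unfolding avg_def
  by (simp add: sum_cube_Suc card_cube_Suc sum_divide_distrib[symmetric])


definition gavg :: "nat \<Rightarrow> ('g::{finite,ab_group_add} \<Rightarrow> real) \<Rightarrow> real" where
  "gavg m f = avg (UNIV \<times> cube m) (\<lambda>(x, h). \<Prod>\<omega>\<in>Pow {1..m}. f (x + (\<Sum>i\<in>\<omega>. h i)))"

lemma gowers_gavg: "gowers_norm m f = root (2^m) (gavg m f)"
  unfolding gowers_norm_def gavg_def ..

lemma gavg_alt: "gavg m f = avg UNIV (\<lambda>x. avg (cube m) (\<lambda>h. \<Prod>\<omega>\<in>Pow {1..m}. f (x + (\<Sum>i\<in>\<omega>. h i))))"
  unfolding gavg_def by (simp add: avg_times finite_cube)

lemma gavg_shift: "gavg m (\<lambda>z. f (z + y)) = gavg m f"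
proof -
  have "gavg m (\<lambda>z. f (z + y)) = avg (cube m) (\<lambda>h. avg UNIV (\<lambda>x. \<Prod>\<omega>\<in>Pow {1..m}. f (x + (\<Sum>i\<in>\<omega>. h i) + y)))"
    by (simp add: gavg_alt avg_swap[where S=UNIV])
  also have "\<dots> = avg (cube m) (\<lambda>h. avg UNIV (\<lambda>x. \<Prod>\<omega>\<in>Pow {1..m}. f (x + (\<Sum>i\<in>\<omega>. h i))))"
  proof (rule avg_cong)
    fix h :: "nat \<Rightarrow> 'a" assume "h \<in> cube m"
    have "avg UNIV (\<lambda>x. \<Prod>\<omega>\<in>Pow {1..m}. f (x + (\<Sum>i\<in>\<omega>. h i) + y))
        = avg UNIV (\<lambda>x. \<Prod>\<omega>\<in>Pow {1..m}. f ((x + y) + (\<Sum>i\<in>\<omega>. h i)))"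
      by (simp add: algebra_simps)
    also have "\<dots> = avg UNIV (\<lambda>x. \<Prod>\<omega>\<in>Pow {1..m}. f (x + (\<Sum>i\<in>\<omega>. h i)))"
      by (rule avg_shift)
    finally show "avg UNIV (\<lambda>x. \<Prod>\<omega>\<in>Pow {1..m}. f (x + (\<Sum>i\<in>\<omega>. h i) + y))
        = avg UNIV (\<lambda>x. \<Prod>\<omega>\<in>Pow {1..m}. f (x + (\<Sum>i\<in>\<omega>. h i)))" .
  qed
  also have "\<dots> = gavg m f" by (simp add: gavg_alt avg_swap[where S=UNIV])
  finally show ?thesis .
qed

lemma prod_Pow_Suc:
  fixes f :: "'g::ab_group_add \<Rightarrow> real"
  shows "(\<Prod>\<omega>\<in>Pow {1..Suc m}. f (x + (\<Sum>i\<in>\<omega>. (k(Suc m := h)) i)))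
     = (\<Prod>\<omega>\<in>Pow {1..m}. f (x + (\<Sum>i\<in>\<omega>. k i)) * f (x + (\<Sum>i\<in>\<omega>. k i) + h))"
proof -
  have ins: "{1..Suc m} = insert (Suc m) {1..m}" by auto
  have fin: "finite (Pow {1..m})" by simp
  have disj: "Pow {1..m} \<inter> insert (Suc m) ` Pow {1..m} = {}" by auto
  have inj: "inj_on (insert (Suc m)) (Pow {1..m})"
    unfolding inj_on_def by (metis Pow_iff atLeastAtMost_iff insert_ident not_less_eq_eq subsetD order_refl)
  have s1: "(\<Sum>i\<in>\<omega>. (k(Suc m := h)) i) = (\<Sum>i\<in>\<omega>. k i)" if "\<omega> \<in> Pow {1..m}" for \<omega>
    using that by (intro sum.cong) auto
  have s2: "(\<Sum>i\<in>insert (Suc m) \<omega>. (k(Suc m := h)) i) = h + (\<Sum>i\<in>\<omega>. k i)" if "\<omega> \<in> Pow {1..m}" for \<omega>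
  proof -
    have "finite \<omega>" "Suc m \<notin> \<omega>" using that finite_subset[of \<omega> "{1..m}"] by auto
    then show ?thesis using s1[OF that] by (simp add: sum.insert)
  qed
  have "(\<Prod>\<omega>\<in>Pow {1..Suc m}. f (x + (\<Sum>i\<in>\<omega>. (k(Suc m := h)) i)))
      = (\<Prod>\<omega>\<in>Pow {1..m}. f (x + (\<Sum>i\<in>\<omega>. (k(Suc m := h)) i))) *
        (\<Prod>\<omega>\<in>insert (Suc m) ` Pow {1..m}. f (x + (\<Sum>i\<in>\<omega>. (k(Suc m := h)) i)))"
    unfolding ins Pow_insert by (rule prod.union_disjoint) (use fin disj in auto)
  also have "(\<Prod>\<omega>\<in>insert (Suc m) ` Pow {1..m}. f (x + (\<Sum>i\<in>\<omega>. (k(Suc m := h)) i)))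
      = (\<Prod>\<omega>\<in>Pow {1..m}. f (x + (\<Sum>i\<in>\<omega>. k i) + h))"
  proof -
    have "(\<Prod>\<omega>\<in>insert (Suc m) ` Pow {1..m}. f (x + (\<Sum>i\<in>\<omega>. (k(Suc m := h)) i)))
       = (\<Prod>\<omega>\<in>Pow {1..m}. f (x + (\<Sum>i\<in>insert (Suc m) \<omega>. (k(Suc m := h)) i)))"
      using prod.reindex[OF inj, of "\<lambda>\<omega>. f (x + (\<Sum>i\<in>\<omega>. (k(Suc m := h)) i))"] by (simp add: comp_def)
    also have "\<dots> = (\<Prod>\<omega>\<in>Pow {1..m}. f (x + (\<Sum>i\<in>\<omega>. k i) + h))"
    proof (rule prod.cong)
      fix \<omega> assume w: "\<omega> \<in> Pow {1..m}"
      have "x + (h + (\<Sum>i\<in>\<omega>. k i)) = x + (\<Sum>i\<in>\<omega>. k i) + h" by (simp add: ac_simps)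
      then show "f (x + (\<Sum>i\<in>insert (Suc m) \<omega>. (k(Suc m := h)) i)) = f (x + (\<Sum>i\<in>\<omega>. k i) + h)"
        using s2[OF w] by (simp only:)
    qed simp
    finally show ?thesis .
  qed
  also have "(\<Prod>\<omega>\<in>Pow {1..m}. f (x + (\<Sum>i\<in>\<omega>. (k(Suc m := h)) i))) = (\<Prod>\<omega>\<in>Pow {1..m}. f (x + (\<Sum>i\<in>\<omega>. k i)))"
    by (rule prod.cong) (simp_all only: s1 refl)
  finally show ?thesis by (simp add: prod.distrib)
qed

lemma gavg_Suc: "avg UNIV (\<lambda>h. gavg m (\<lambda>z. f z * f (z + h))) = gavg (Suc m) f"
proof -
  have "gavg (Suc m) f = avg UNIV (\<lambda>x. avg (cube (Suc m)) (\<lambda>k. \<Prod>\<omega>\<in>Pow {1..Suc m}. f (x + (\<Sum>i\<in>\<omega>. k i))))"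
    by (rule gavg_alt)
  also have "\<dots> = avg UNIV (\<lambda>x. avg (cube m) (\<lambda>k. avg UNIV (\<lambda>h.
      \<Prod>\<omega>\<in>Pow {1..Suc m}. f (x + (\<Sum>i\<in>\<omega>. (k(Suc m := h)) i)))))"
    by (rule avg_cong, rule avg_cube_Suc)
  also have "\<dots> = avg UNIV (\<lambda>x. avg (cube m) (\<lambda>k. avg UNIV (\<lambda>h.
      \<Prod>\<omega>\<in>Pow {1..m}. f (x + (\<Sum>i\<in>\<omega>. k i)) * f (x + (\<Sum>i\<in>\<omega>. k i) + h))))"
    by (intro avg_cong) (rule prod_Pow_Suc)
  also have "\<dots> = avg UNIV (\<lambda>x. avg UNIV (\<lambda>h. avg (cube m) (\<lambda>k.
      \<Prod>\<omega>\<in>Pow {1..m}. f (x + (\<Sum>i\<in>\<omega>. k i)) * f (x + (\<Sum>i\<in>\<omega>. k i) + h))))"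
    by (rule avg_cong, rule avg_swap)
  also have "\<dots> = avg UNIV (\<lambda>h. avg UNIV (\<lambda>x. avg (cube m) (\<lambda>k.
      \<Prod>\<omega>\<in>Pow {1..m}. f (x + (\<Sum>i\<in>\<omega>. k i)) * f (x + (\<Sum>i\<in>\<omega>. k i) + h))))"
    by (rule avg_swap)
  also have "\<dots> = avg UNIV (\<lambda>h. gavg m (\<lambda>z. f z * f (z + h)))"
    by (simp only: gavg_alt)
  finally show ?thesis ..
qed


definition Tn :: "nat \<Rightarrow> ('g::{finite,ab_group_add} \<Rightarrow> real) \<Rightarrow> (nat \<Rightarrow> (nat \<Rightarrow> 'g) \<Rightarrow> real) \<Rightarrow> real" where
  "Tn m f u = avg (cube m) (\<lambda>x. f (\<Sum>i\<in>{1..m}. x i) * (\<Prod>j\<in>{1..m}. u j x))"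

definition goodu :: "(nat \<Rightarrow> (nat \<Rightarrow> 'g) \<Rightarrow> real) \<Rightarrow> bool" where
  "goodu u \<longleftrightarrow> (\<forall>j x. \<bar>u j x\<bar> \<le> 1) \<and> (\<forall>j x a. u j (x(j := a)) = u j x)"

lemma goodu_step:
  assumes "goodu u"
  shows "goodu (\<lambda>j x. u j (x(n := y)) * u j (x(n := y')))"
proof -
  have b: "\<bar>u j x\<bar> \<le> 1" for j x using assms unfolding goodu_def by auto
  have i: "u j (x(j := a)) = u j x" for j x a using assms unfolding goodu_def by auto
  have upd: "x(j := a, n := z) = (x(n := z))(j := (if j = n then z else a))" for x :: "nat \<Rightarrow> 'a" and j a z
    by (auto simp: fun_eq_iff)
  show ?thesis unfolding goodu_def
  proof (intro conjI allI)
    fix j x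
    show "\<bar>u j (x(n := y)) * u j (x(n := y'))\<bar> \<le> 1"
      unfolding abs_mult by (rule mult_le_one) (auto intro: b)
  next
    fix j x a
    show "u j (x(j := a, n := y)) * u j (x(j := a, n := y')) = u j (x(n := y)) * u j (x(n := y'))"
      by (simp only: upd i)
  qed
qed

lemma sum_upd_Suc: "(\<Sum>i\<in>{1..Suc m}. (x(Suc m := y)) i) = (\<Sum>i\<in>{1..m}. x i) + y"
proof -
  have "{1..Suc m} = insert (Suc m) {1..m}" by auto
  then have "(\<Sum>i\<in>{1..Suc m}. (x(Suc m := y)) i) = y + (\<Sum>i\<in>{1..m}. (x(Suc m := y)) i)" by simp
  also have "(\<Sum>i\<in>{1..m}. (x(Suc m := y)) i) = (\<Sum>i\<in>{1..m}. x i)" by (rule sum.cong) auto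
  finally show ?thesis by (simp add: add.commute)
qed

lemma prod_upd_Suc: "(\<Prod>j\<in>{1..Suc m}. g j) = g (Suc m) * (\<Prod>j\<in>{1..m}. g j)"
proof -
  have "{1..Suc m} = insert (Suc m) {1..m}" by auto
  then show ?thesis by simp
qed

lemma gcs_step:
  fixes f :: "'g::{finite,ab_group_add} \<Rightarrow> real"
  assumes "goodu u"
  shows "(Tn (Suc m) f u)^2 \<le> avg UNIV (\<lambda>h. avg UNIV (\<lambda>y.
     Tn m (\<lambda>z. f (z + y) * f (z + y + h)) (\<lambda>j x. u j (x(Suc m := y)) * u j (x(Suc m := y + h)))))"
proof -
  have b: "\<bar>u j x\<bar> \<le> 1" for j x using assms unfolding goodu_def by auto
  have i: "u j (x(j := a)) = u j x" for j x a using assms unfolding goodu_def by auto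
  define \<psi> where "\<psi> x y = f ((\<Sum>i\<in>{1..m}. x i) + y) * (\<Prod>j\<in>{1..m}. u j (x(Suc m := y)))" for x y
  have "Tn (Suc m) f u = avg (cube m) (\<lambda>x. avg UNIV (\<lambda>y.
      f (\<Sum>i\<in>{1..Suc m}. (x(Suc m := y)) i) * (\<Prod>j\<in>{1..Suc m}. u j (x(Suc m := y)))))"
    unfolding Tn_def by (rule avg_cube_Suc)
  also have "\<dots> = avg (cube m) (\<lambda>x. u (Suc m) x * avg UNIV (\<psi> x))"
  proof (rule avg_cong)
    fix x :: "nat \<Rightarrow> 'g"
    have "avg UNIV (\<lambda>y. f (\<Sum>i\<in>{1..Suc m}. (x(Suc m := y)) i) * (\<Prod>j\<in>{1..Suc m}. u j (x(Suc m := y))))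
       = avg UNIV (\<lambda>y. u (Suc m) x * \<psi> x y)"
      by (rule avg_cong) (simp add: sum_upd_Suc prod_upd_Suc i \<psi>_def mult_ac)
    then show "avg UNIV (\<lambda>y. f (\<Sum>i\<in>{1..Suc m}. (x(Suc m := y)) i) * (\<Prod>j\<in>{1..Suc m}. u j (x(Suc m := y))))
       = u (Suc m) x * avg UNIV (\<psi> x)" by (simp add: avg_cmult)
  qed
  finally have T: "Tn (Suc m) f u = avg (cube m) (\<lambda>x. u (Suc m) x * avg UNIV (\<psi> x))" .
  have "(Tn (Suc m) f u)^2 \<le> avg (cube m) (\<lambda>x. (u (Suc m) x * avg UNIV (\<psi> x))^2)"
    unfolding T by (rule jensen2[OF finite_cube cube_ne])
  also have "\<dots> \<le> avg (cube m) (\<lambda>x. (avg UNIV (\<psi> x))^2)"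
  proof (rule avg_mono)
    fix x
    have "(u (Suc m) x)^2 \<le> 1" using b[of "Suc m" x] by (simp add: abs_square_le_1)
    then show "(u (Suc m) x * avg UNIV (\<psi> x))^2 \<le> (avg UNIV (\<psi> x))^2"
      unfolding power_mult_distrib by (simp add: mult_left_le_one_le)
  qed
  also have "\<dots> = avg (cube m) (\<lambda>x. avg UNIV (\<lambda>y. avg UNIV (\<lambda>h. \<psi> x y * \<psi> x (y + h))))"
    by (simp only: sq_avg)
  also have "\<dots> = avg UNIV (\<lambda>y. avg (cube m) (\<lambda>x. avg UNIV (\<lambda>h. \<psi> x y * \<psi> x (y + h))))"
    by (rule avg_swap)
  also have "\<dots> = avg UNIV (\<lambda>y. avg UNIV (\<lambda>h. avg (cube m) (\<lambda>x. \<psi> x y * \<psi> x (y + h))))"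
    by (rule avg_cong, rule avg_swap)
  also have "\<dots> = avg UNIV (\<lambda>h. avg UNIV (\<lambda>y. avg (cube m) (\<lambda>x. \<psi> x y * \<psi> x (y + h))))"
    by (rule avg_swap)
  also have "\<dots> = avg UNIV (\<lambda>h. avg UNIV (\<lambda>y.
     Tn m (\<lambda>z. f (z + y) * f (z + y + h)) (\<lambda>j x. u j (x(Suc m := y)) * u j (x(Suc m := y + h)))))"
    unfolding Tn_def \<psi>_def
    by (intro avg_cong) (simp add: prod.distrib add.assoc mult_ac)
  finally show ?thesis .
qed


lemma Tn_0: "Tn 0 f u = f 0"
  unfolding Tn_def cube_0 avg_def by simp

lemma gavg_0: "gavg 0 f = avg UNIV f"
  unfolding gavg_alt cube_0 avg_def by simp

lemma gcs:
  fixes f :: "'g::{finite,ab_group_add} \<Rightarrow> real"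
  assumes "goodu u"
  shows "(Tn (Suc m) f u)^(2^Suc m) \<le> gavg (Suc m) f"
  using assms
proof (induction m arbitrary: f u)
  case 0
  have "(Tn (Suc 0) f u)^(2^Suc 0) = (Tn (Suc 0) f u)^2" by simp
  also have "\<dots> \<le> avg UNIV (\<lambda>h. avg UNIV (\<lambda>y. f y * f (y + h)))"
    using gcs_step[OF 0, of 0 f] by (simp add: Tn_0)
  also have "\<dots> = gavg (Suc 0) f"
    by (simp add: gavg_Suc[symmetric] gavg_0)
  finally show ?case .
next
  case (Suc m)
  define I where "I h y = Tn (Suc m) (\<lambda>z. f (z + y) * f (z + y + h))
      (\<lambda>j x. u j (x(Suc (Suc m) := y)) * u j (x(Suc (Suc m) := y + h)))" for h y
  have st: "(Tn (Suc (Suc m)) f u)^2 \<le> avg UNIV (\<lambda>h. avg UNIV (\<lambda>y. I h y))"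
    unfolding I_def by (rule gcs_step[OF Suc.prems])
  have "(Tn (Suc (Suc m)) f u)^(2^Suc (Suc m)) = ((Tn (Suc (Suc m)) f u)^2)^(2^Suc m)"
    by (simp add: power_mult[symmetric] mult.commute)
  also have "\<dots> \<le> (avg UNIV (\<lambda>h. avg UNIV (\<lambda>y. I h y)))^(2^Suc m)"
    by (rule power_mono[OF st]) simp
  also have "\<dots> \<le> avg UNIV (\<lambda>h. (avg UNIV (\<lambda>y. I h y))^(2^Suc m))"
    by (rule jensen_pow) auto
  also have "\<dots> \<le> avg UNIV (\<lambda>h. avg UNIV (\<lambda>y. (I h y)^(2^Suc m)))"
    by (rule avg_mono, rule jensen_pow) auto
  also have "\<dots> \<le> avg UNIV (\<lambda>h. avg UNIV (\<lambda>y. gavg (Suc m) (\<lambda>z. f (z + y) * f (z + y + h))))"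
    unfolding I_def by (intro avg_mono Suc.IH goodu_step Suc.prems)
  also have "\<dots> = avg UNIV (\<lambda>h. avg UNIV (\<lambda>y::'g. gavg (Suc m) (\<lambda>z. f z * f (z + h))))"
    using gavg_shift[of "Suc m" "\<lambda>z. f z * f (z + _)"] by simp
  also have "\<dots> = gavg (Suc (Suc m)) f"
    by (simp add: gavg_Suc avg_const)
  finally show ?case .
qed


lemma Bs_eq: "{B. B \<subseteq> {1..d+1} \<and> card B = d} = (\<lambda>j. {1..d+1} - {j}) ` {1..(d+1::nat)}"
proof (intro equalityI subsetI)
  fix B assume "B \<in> {B. B \<subseteq> {1..d+1} \<and> card B = d}"
  then have B: "B \<subseteq> {1..d+1}" "card B = d" by auto
  have "B \<noteq> {1..d+1}"
  proof
    assume "B = {1..d+1}"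
    then have "card B = d+1" by simp
    with B show False by simp
  qed
  then have "\<exists>j. j \<in> {1..d+1} \<and> j \<notin> B" using B(1) by blast
  then obtain j where j: "j \<in> {1..d+1}" "j \<notin> B" by blast
  then have sub: "B \<subseteq> {1..d+1} - {j}" using B by auto
  have "card ({1..d+1} - {j}) = d" using j by simp
  then have "B = {1..d+1} - {j}" using card_subset_eq[OF _ sub] B by simp
  then show "B \<in> (\<lambda>j. {1..d+1} - {j}) ` {1..d+1}" using j by auto
next
  fix B assume "B \<in> (\<lambda>j. {1..d+1} - {j}) ` {1..(d+1::nat)}"
  then show "B \<in> {B. B \<subseteq> {1..d+1} \<and> card B = d}" by auto
qed

lemma inj_compl: "inj_on (\<lambda>j. {1..d+1} - {j}) {1..(d+1::nat)}"
  unfolding inj_on_def by auto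

lemma prod_Bs: "(\<Prod>B\<in>{B. B \<subseteq> {1..d+1} \<and> card B = d}. h B) = (\<Prod>j\<in>{1..(d+1::nat)}. h ({1..d+1} - {j}))"
  by (simp only: Bs_eq prod.reindex[OF inj_compl] comp_def)

definition bval :: "nat \<Rightarrow> ((nat \<Rightarrow> 'g::finite) \<Rightarrow> real) \<Rightarrow> (nat set \<Rightarrow> (nat \<Rightarrow> 'g) set) \<Rightarrow> real" where
  "bval d g S = \<bar>avg (cube (d+1))
        (\<lambda>x. g x * (\<Prod>B\<in>{B. B \<subseteq> {1..d+1} \<and> card B = d}. ind (S B) (restrict x B)))\<bar>"

definition bSS :: "nat \<Rightarrow> (nat set \<Rightarrow> (nat \<Rightarrow> 'g::finite) set) set" where
  "bSS d = {S. \<forall>B. B \<subseteq> {1..d+1} \<and> card B = d \<longrightarrow> S B \<subseteq> (B \<rightarrow>\<^sub>E (UNIV :: 'g set))}"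

lemma box_norm_bval: "box_norm d g = Max (bval d g ` bSS d)"
  unfolding box_norm_def bval_def bSS_def ..

lemma finite_bval: "finite (bval d g ` bSS d)"
proof -
  let ?Bs = "{B. B \<subseteq> {1..d+1} \<and> card B = d}"
  have fB: "finite ?Bs" by (rule finite_subset[of _ "Pow {1..d+1}"]) auto
  have "bval d g ` bSS d \<subseteq> bval d g ` (PiE ?Bs (\<lambda>B. Pow (B \<rightarrow>\<^sub>E (UNIV :: 'a set))))"
  proof
    fix v assume "v \<in> bval d g ` bSS d"
    then obtain S where S: "S \<in> bSS d" "v = bval d g S" by auto
    have "bval d g S = bval d g (restrict S ?Bs)"
    proof -
      have "(\<Prod>B\<in>?Bs. ind (S B) (restrict x B)) = (\<Prod>B\<in>?Bs. ind (restrict S ?Bs B) (restrict x B))" for x :: "nat \<Rightarrow> 'a"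
        by (rule prod.cong) auto
      then show ?thesis unfolding bval_def by simp
    qed
    moreover have "restrict S ?Bs \<in> PiE ?Bs (\<lambda>B. Pow (B \<rightarrow>\<^sub>E (UNIV :: 'a set)))"
      using S(1) unfolding bSS_def by auto
    ultimately show "v \<in> bval d g ` (PiE ?Bs (\<lambda>B. Pow (B \<rightarrow>\<^sub>E (UNIV :: 'a set))))" using S by auto
  qed
  moreover have "finite (PiE ?Bs (\<lambda>B. Pow (B \<rightarrow>\<^sub>E (UNIV :: 'a set))))"
  proof (rule finite_PiE[OF fB])
    fix B assume "B \<in> ?Bs"
    then have "finite B" using finite_subset[of B "{1..d+1}"] by auto
    then show "finite (Pow (B \<rightarrow>\<^sub>E (UNIV :: 'a set)))" by (simp add: finite_PiE)
  qed
  ultimately show ?thesis by (rule finite_subset[OF _ finite_imageI])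
qed

lemma bval_le: "S \<in> bSS d \<Longrightarrow> bval d g S \<le> box_norm d g"
  unfolding box_norm_bval by (rule Max_ge[OF finite_bval]) auto

lemma box_norm_nonneg: "0 \<le> box_norm d g"
proof -
  have "(\<lambda>_. {}) \<in> bSS d" unfolding bSS_def by auto
  then have "bval d g (\<lambda>_. {}) \<le> box_norm d g" by (rule bval_le)
  moreover have "0 \<le> bval d g (\<lambda>_. {})" unfolding bval_def by simp
  ultimately show ?thesis by simp
qed

lemma restrict_upd: "j \<notin> B \<Longrightarrow> restrict (x(j := a)) B = restrict x B"
  by (auto simp: restrict_def fun_eq_iff)

lemma box_le_gowers:
  fixes f :: "'g::{finite,ab_group_add} \<Rightarrow> real"
  shows "box_norm d (\<lambda>x. f (\<Sum>i\<in>{1..d+1}. x i)) \<le> gowers_norm (d+1) f"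
proof -
  let ?g = "\<lambda>x. f (\<Sum>i\<in>{1..d+1}. x i)"
  have ne: "bval d ?g ` bSS d \<noteq> {}"
  proof -
    have "(\<lambda>_. {}) \<in> bSS d" unfolding bSS_def by auto
    then show ?thesis by blast
  qed
  show ?thesis unfolding box_norm_bval
  proof (subst Max_le_iff[OF finite_bval ne], intro ballI)
    fix v assume "v \<in> bval d ?g ` bSS d"
    then obtain S where S: "S \<in> bSS d" "v = bval d ?g S" by auto
    define u where "u j x = ind (S ({1..d+1} - {j})) (restrict x ({1..d+1} - {j}))" for j x
    have gu: "goodu u" unfolding goodu_def
    proof (intro conjI allI)
      fix j x show "\<bar>u j x\<bar> \<le> 1" unfolding u_def ind_def by simp
    next
      fix j x a show "u j (x(j := a)) = u j x" unfolding u_def by (simp add: restrict_upd)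
    qed
    have "bval d ?g S = \<bar>Tn (Suc d) f u\<bar>"
      unfolding bval_def Tn_def u_def prod_Bs by simp
    also have "\<dots> = root (2^Suc d) (\<bar>Tn (Suc d) f u\<bar>^(2^Suc d))"
      by (simp add: real_root_power_cancel)
    also have "\<dots> = root (2^Suc d) ((Tn (Suc d) f u)^(2^Suc d))"
      by (simp add: power_even_abs)
    also have "\<dots> \<le> root (2^Suc d) (gavg (Suc d) f)"
      by (rule real_root_le_mono) (use gcs[OF gu, of d f] in simp_all)
    also have "\<dots> = gowers_norm (d+1) f" by (simp add: gowers_gavg)
    finally show "v \<le> gowers_norm (d+1) f" using S by simp
  qed
qed


definition good01 :: "(nat \<Rightarrow> (nat \<Rightarrow> 'g) \<Rightarrow> real) \<Rightarrow> bool" where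
  "good01 u \<longleftrightarrow> (\<forall>j x. u j x = 0 \<or> u j x = 1) \<and> (\<forall>j x a. u j (x(j := a)) = u j x)"

lemma box_bound0:
  fixes g :: "(nat \<Rightarrow> 'g::{finite,zero}) \<Rightarrow> real"
  assumes "good01 u"
  shows "\<bar>avg (cube (d+1)) (\<lambda>x. g x * (\<Prod>j\<in>{1..d+1}. u j x))\<bar> \<le> box_norm d g"
proof -
  have u01: "u j x = 0 \<or> u j x = 1" for j x using assms unfolding good01_def by auto
  have ui: "u j (x(j := a)) = u j x" for j x a using assms unfolding good01_def by auto
  define te where "te B = the_elem ({1..d+1} - B)" for B :: "nat set"
  define Sf where "Sf B = {w \<in> B \<rightarrow>\<^sub>E (UNIV :: 'g set). u (te B) (w(te B := 0)) = 1}" for B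
  have Sf: "Sf \<in> bSS d" unfolding bSS_def Sf_def by auto
  have key: "ind (Sf ({1..d+1} - {j})) (restrict x ({1..d+1} - {j})) = u j x"
    if x: "x \<in> cube (d+1)" and j: "j \<in> {1..d+1}" for x j
  proof -
    have "{1..d+1} - ({1..d+1} - {j}) = {j}" using j by auto
    then have tj: "te ({1..d+1} - {j}) = j" unfolding te_def by simp
    have "(restrict x ({1..d+1} - {j}))(j := 0) = x(j := 0)"
      using x unfolding cube_def by (auto simp: fun_eq_iff PiE_def extensional_def)
    then have "u j ((restrict x ({1..d+1} - {j}))(j := 0)) = u j x" by (simp add: ui)
    then show ?thesis unfolding ind_def Sf_def tj using u01[of j x] by auto
  qed
  have "bval d g Sf = \<bar>avg (cube (d+1)) (\<lambda>x. g x * (\<Prod>j\<in>{1..d+1}. u j x))\<bar>"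
    unfolding bval_def prod_Bs
    by (intro arg_cong[where f=abs] avg_cong arg_cong[where f="\<lambda>p. g _ * p"] prod.cong refl)
       (rule key; assumption)
  then show ?thesis using bval_le[OF Sf, of g] by simp
qed

definition tau :: "'g::plus \<Rightarrow> (nat \<Rightarrow> 'g) \<Rightarrow> (nat \<Rightarrow> 'g)" where
  "tau c y = y(1 := y 1 + c)"

lemma tau_cube: "y \<in> cube (d+1) \<Longrightarrow> tau c y \<in> cube (d+1)"
  unfolding tau_def cube_def by (auto simp: PiE_def extensional_def)

lemma tau_inv1: "tau (- c) (tau c y) = (y :: nat \<Rightarrow> 'g::ab_group_add)"
  unfolding tau_def by (auto simp: fun_eq_iff)
lemma tau_inv2: "tau c (tau (- c) y) = (y :: nat \<Rightarrow> 'g::ab_group_add)"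
  unfolding tau_def by (auto simp: fun_eq_iff)

lemma box_bound:
  fixes g :: "(nat \<Rightarrow> 'g::{finite,ab_group_add}) \<Rightarrow> real"
  assumes "good01 u"
  shows "\<bar>avg (cube (d+1)) (\<lambda>y. g (tau c y) * (\<Prod>j\<in>{1..d+1}. u j y))\<bar> \<le> box_norm d g"
proof -
  have u01: "u j x = 0 \<or> u j x = 1" for j x using assms unfolding good01_def by auto
  have ui: "u j (x(j := a)) = u j x" for j x a using assms unfolding good01_def by auto
  define u' where "u' j y = u j (tau (- c) y)" for j y
  have "(\<Sum>y\<in>cube (d+1). g (tau c y) * (\<Prod>j\<in>{1..d+1}. u j y))
      = (\<Sum>y\<in>cube (d+1). g y * (\<Prod>j\<in>{1..d+1}. u' j y))"
    by (rule sum.reindex_bij_witness[where i="tau (- c)" and j="tau c"])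
       (auto simp: tau_cube u'_def tau_inv1 tau_inv2 simp del: One_nat_def Suc_eq_plus1)
  then have eq: "avg (cube (d+1)) (\<lambda>y. g (tau c y) * (\<Prod>j\<in>{1..d+1}. u j y))
      = avg (cube (d+1)) (\<lambda>y. g y * (\<Prod>j\<in>{1..d+1}. u' j y))"
    unfolding avg_def by simp
  have upd: "tau (- c) (y(j := a)) = (tau (- c) y)(j := (if j = 1 then a - c else a))" for y j a
    unfolding tau_def by (auto simp: fun_eq_iff)
  have "good01 u'" unfolding good01_def u'_def
    by (auto simp: u01 upd ui)
  from box_bound0[OF this, where g=g and d=d] eq show ?thesis by simp
qed


lemma prod_01: "(\<And>x. x \<in> A \<Longrightarrow> h x = 0 \<or> h x = (1::real)) \<Longrightarrow> prod h A = 0 \<or> prod h A = 1"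
proof (induction A rule: infinite_finite_induct)
  case (insert x F)
  have hx: "h x = 0 \<or> h x = 1" using insert.prems by auto
  have "prod h F = 0 \<or> prod h F = 1" using insert.prems by (intro insert.IH) auto
  with hx show ?case using insert.hyps by auto
qed auto

lemma sum_tau: "(\<Sum>i\<in>{1..d+1}. (tau c y) i) = (\<Sum>i\<in>{1..d+1::nat}. y i) + (c::'g::ab_group_add)"
proof -
  have m: "(1::nat) \<in> {1..d+1}" by simp
  have "(\<Sum>i\<in>{1..d+1}. (tau c y) i) = (tau c y) 1 + (\<Sum>i\<in>{1..d+1} - {1}. (tau c y) i)"
    by (rule sum.remove[OF _ m]) simp
  also have "(\<Sum>i\<in>{1..d+1} - {1}. (tau c y) i) = (\<Sum>i\<in>{1..d+1} - {1}. y i)"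
    by (rule sum.cong) (auto simp: tau_def)
  also have "(\<Sum>i\<in>{1..d+1}. y i) = y 1 + (\<Sum>i\<in>{1..d+1} - {1}. y i)"
    by (rule sum.remove[OF _ m]) simp
  ultimately show ?thesis by (simp add: tau_def ac_simps)
qed

lemma key_lemma:
  fixes A :: "'g::{finite,ab_group_add} set" and V :: "'v set"
  assumes V: "finite V" and eV: "e \<subseteq> V" and Se: "S \<subseteq> e" and cS: "card S = d+1"
    and fE: "finite E'" and nS: "\<forall>f\<in>E'. \<not> S \<subseteq> f"
  shows "\<bar>avg (V \<rightarrow>\<^sub>E (UNIV::'g set)) (\<lambda>x. (ind A (\<Sum>v\<in>e. x v) - density A) * (\<Prod>f\<in>E'. ind A (\<Sum>v\<in>f. x v)))\<bar>
     \<le> box_norm d (\<lambda>x. Gamma (d+1) A x - density A)"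
proof -
  have fe: "finite e" using finite_subset[OF eV V] .
  have fS: "finite S" using finite_subset[OF Se fe] .
  obtain \<sigma> where \<sigma>: "bij_betw \<sigma> {1..d+1} S" using ex_bij_betw_nat_finite_1[OF fS] cS by auto
  define \<rho> where "\<rho> = inv_into {1..d+1} \<sigma>"
  have \<rho>\<sigma>: "\<rho> (\<sigma> i) = i" if "i \<in> {1..d+1}" for i
    unfolding \<rho>_def using bij_betw_inv_into_left[OF \<sigma> that] .
  have \<sigma>\<rho>: "\<sigma> (\<rho> v) = v" if "v \<in> S" for v
    unfolding \<rho>_def using bij_betw_inv_into_right[OF \<sigma> that] .
  have \<rho>bij: "bij_betw \<rho> S {1..d+1}" unfolding \<rho>_def by (rule bij_betw_inv_into[OF \<sigma>])
  have \<rho>S: "\<rho> v \<in> {1..d+1}" if "v \<in> S" for v using bij_betw_apply[OF \<rho>bij that] .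
  have \<sigma>I: "\<sigma> i \<in> S" if "i \<in> {1..d+1}" for i using bij_betw_apply[OF \<sigma> that] .
  define W where "W = V - S"
  define \<Phi> where "\<Phi> y z = (\<lambda>v. if v \<in> S then y (\<rho> v) else z v)" for y z :: "_ \<Rightarrow> 'g"
  have sumdec: "(\<Sum>x\<in>V \<rightarrow>\<^sub>E (UNIV::'g set). F x) = (\<Sum>z\<in>W \<rightarrow>\<^sub>E (UNIV::'g set). \<Sum>y\<in>cube (d+1). F (\<Phi> y z))"
    for F :: "('v \<Rightarrow> 'g) \<Rightarrow> real"
  proof -
    have "(\<Sum>x\<in>V \<rightarrow>\<^sub>E (UNIV::'g set). F x) = (\<Sum>p\<in>cube (d+1) \<times> (W \<rightarrow>\<^sub>E (UNIV::'g set)). F (\<Phi> (fst p) (snd p)))"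
    proof (rule sum.reindex_bij_witness[where i="\<lambda>p. \<Phi> (fst p) (snd p)"
          and j="\<lambda>x. (restrict (x \<circ> \<sigma>) {1..d+1}, restrict x W)"])
      fix a assume a: "a \<in> V \<rightarrow>\<^sub>E (UNIV::'g set)"
      show ja: "\<Phi> (fst (restrict (a \<circ> \<sigma>) {1..d+1}, restrict a W)) (snd (restrict (a \<circ> \<sigma>) {1..d+1}, restrict a W)) = a"
      proof
        fix v show "\<Phi> (fst (restrict (a \<circ> \<sigma>) {1..d+1}, restrict a W)) (snd (restrict (a \<circ> \<sigma>) {1..d+1}, restrict a W)) v = a v"
          using a \<rho>S \<sigma>\<rho> by (auto simp: \<Phi>_def W_def PiE_def extensional_def)
      qed
      show "(restrict (a \<circ> \<sigma>) {1..d+1}, restrict a W) \<in> cube (d+1) \<times> (W \<rightarrow>\<^sub>E UNIV)"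
        unfolding cube_def by auto
      show "F (\<Phi> (fst (restrict (a \<circ> \<sigma>) {1..d+1}, restrict a W)) (snd (restrict (a \<circ> \<sigma>) {1..d+1}, restrict a W))) = F a"
        by (simp only: ja)
    next
      fix b :: "(nat \<Rightarrow> 'g) \<times> ('v \<Rightarrow> 'g)" assume b: "b \<in> cube (d+1) \<times> (W \<rightarrow>\<^sub>E (UNIV::'g set))"
      show "(restrict (\<Phi> (fst b) (snd b) \<circ> \<sigma>) {1..d+1}, restrict (\<Phi> (fst b) (snd b)) W) = b"
      proof (cases b)
        case (Pair y z)
        have "restrict (\<Phi> y z \<circ> \<sigma>) {1..d+1} = y"
        proof
          fix i show "restrict (\<Phi> y z \<circ> \<sigma>) {1..d+1} i = y i"
            using b Pair \<sigma>I \<rho>\<sigma> by (auto simp: \<Phi>_def cube_def PiE_def extensional_def)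
        qed
        moreover have "restrict (\<Phi> y z) W = z"
        proof
          fix v show "restrict (\<Phi> y z) W v = z v"
            using b Pair by (auto simp: \<Phi>_def W_def PiE_def extensional_def)
        qed
        ultimately show ?thesis using Pair by simp
      qed
      show "\<Phi> (fst b) (snd b) \<in> V \<rightarrow>\<^sub>E UNIV"
        using b Se eV by (auto simp: \<Phi>_def W_def PiE_def extensional_def)
    qed
    also have "\<dots> = (\<Sum>y\<in>cube (d+1). \<Sum>z\<in>W \<rightarrow>\<^sub>E (UNIV::'g set). F (\<Phi> y z))"
      by (simp add: sum.cartesian_product split_beta)
    also have "\<dots> = (\<Sum>z\<in>W \<rightarrow>\<^sub>E (UNIV::'g set). \<Sum>y\<in>cube (d+1). F (\<Phi> y z))"
      by (rule sum.swap)
    finally show ?thesis .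
  qed
  have fW: "finite (W \<rightarrow>\<^sub>E (UNIV::'g set))" using V unfolding W_def by (intro finite_PiE) auto
  have neW: "W \<rightarrow>\<^sub>E (UNIV::'g set) \<noteq> {}" by (simp add: PiE_eq_empty_iff)
  have avgdec: "avg (V \<rightarrow>\<^sub>E (UNIV::'g set)) F = avg (W \<rightarrow>\<^sub>E (UNIV::'g set)) (\<lambda>z. avg (cube (d+1)) (\<lambda>y. F (\<Phi> y z)))"
    for F :: "('v \<Rightarrow> 'g) \<Rightarrow> real"
  proof -
    have "real (card (V \<rightarrow>\<^sub>E (UNIV::'g set))) = real (card (W \<rightarrow>\<^sub>E (UNIV::'g set))) * real (card (cube (d+1) :: (nat \<Rightarrow> 'g) set))"
      using sumdec[of "\<lambda>_. 1"] by simp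
    then show ?thesis using sumdec[of F]
      unfolding avg_def by (simp add: sum_divide_distrib[symmetric] mult.commute)
  qed
  show ?thesis
    unfolding avgdec
  proof (rule avg_le_const[OF fW neW])
    fix z assume z: "z \<in> W \<rightarrow>\<^sub>E (UNIV::'g set)"
    define c where "c = (\<Sum>v\<in>e - S. z v)"
    have s1: "(\<Sum>v\<in>e. \<Phi> y z v) = (\<Sum>i\<in>{1..d+1}. y i) + c" for y
    proof -
      have "(\<Sum>v\<in>e. \<Phi> y z v) = (\<Sum>v\<in>e - S. \<Phi> y z v) + (\<Sum>v\<in>S. \<Phi> y z v)"
        by (rule sum.subset_diff[OF Se fe])
      also have "(\<Sum>v\<in>e - S. \<Phi> y z v) = c" unfolding c_def by (rule sum.cong) (auto simp: \<Phi>_def)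
      also have "(\<Sum>v\<in>S. \<Phi> y z v) = (\<Sum>v\<in>S. y (\<rho> v))" by (rule sum.cong) (auto simp: \<Phi>_def)
      also have "\<dots> = (\<Sum>i\<in>{1..d+1}. y i)" by (rule sum.reindex_bij_betw[OF \<rho>bij])
      finally show ?thesis by (simp add: add.commute)
    qed
    define jf where "jf f = (SOME j. j \<in> {1..d+1} \<and> \<sigma> j \<notin> f)" for f :: "'v set"
    have jf: "jf f \<in> {1..d+1} \<and> \<sigma> (jf f) \<notin> f" if fE': "f \<in> E'" for f
    proof -
      obtain v where "v \<in> S" "v \<notin> f" using nS fE' by auto
      then have "\<exists>j. j \<in> {1..d+1} \<and> \<sigma> j \<notin> f" using \<rho>S \<sigma>\<rho> by metis
      then show ?thesis unfolding jf_def by (rule someI_ex)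
    qed
    define u where "u j y = (\<Prod>f\<in>{f \<in> E'. jf f = j}. ind A (\<Sum>v\<in>f. \<Phi> y z v))" for j y
    have prodeq: "(\<Prod>f\<in>E'. ind A (\<Sum>v\<in>f. \<Phi> y z v)) = (\<Prod>j\<in>{1..d+1}. u j y)" for y
      unfolding u_def by (rule prod.group[symmetric]) (use fE jf in auto)
    have gu: "good01 u" unfolding good01_def
    proof (intro conjI allI)
      fix j y show "u j y = 0 \<or> u j y = 1" unfolding u_def by (rule prod_01) (simp add: ind_def)
    next
      fix j y a
      have "(\<Sum>v\<in>f. \<Phi> (y(j := a)) z v) = (\<Sum>v\<in>f. \<Phi> y z v)" if f: "f \<in> {f \<in> E'. jf f = j}" for f
      proof (rule sum.cong)
        fix v assume v: "v \<in> f"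
        have "\<rho> v \<noteq> j" if "v \<in> S"
        proof
          assume "\<rho> v = j"
          then have "\<sigma> j = v" using \<sigma>\<rho>[OF that] by simp
          with v jf[of f] f show False by auto
        qed
        then show "\<Phi> (y(j := a)) z v = \<Phi> y z v" by (auto simp: \<Phi>_def)
      qed simp
      then show "u j (y(j := a)) = u j y" unfolding u_def by (intro prod.cong) auto
    qed
    have "avg (cube (d+1)) (\<lambda>y. (ind A (\<Sum>v\<in>e. \<Phi> y z v) - density A) * (\<Prod>f\<in>E'. ind A (\<Sum>v\<in>f. \<Phi> y z v)))
       = avg (cube (d+1)) (\<lambda>y. (Gamma (d+1) A (tau c y) - density A) * (\<Prod>j\<in>{1..d+1}. u j y))"
      by (rule avg_cong) (simp only: s1 prodeq Gamma_def sum_tau)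
    then show "\<bar>avg (cube (d+1)) (\<lambda>y. (ind A (\<Sum>v\<in>e. \<Phi> y z v) - density A) * (\<Prod>f\<in>E'. ind A (\<Sum>v\<in>f. \<Phi> y z v)))\<bar>
       \<le> box_norm d (\<lambda>x. Gamma (d+1) A x - density A)"
      using box_bound[OF gu, where g="\<lambda>x. Gamma (d+1) A x - density A" and c=c and d=d] by simp
  qed
qed


lemma density_bounds: "0 \<le> density (A::'g::finite set)" "density A \<le> 1"
proof -
  have "card A \<le> card (UNIV::'g set)" by (rule card_mono) auto
  moreover have "card (UNIV::'g set) > 0" by (simp add: finite_UNIV_card_ge_0)
  ultimately show "0 \<le> density A" "density A \<le> 1" unfolding density_def by auto
qed

lemma counting:
  fixes A :: "'g::{finite,ab_group_add} set" and V :: "'v set"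
  assumes V: "finite V" and EV: "\<forall>e\<in>E. e \<subseteq> V"
    and sim: "simple_hypergraph (d+1) E"
    and fF: "finite F" and FE: "F \<subseteq> E"
  shows "\<bar>avg (V \<rightarrow>\<^sub>E (UNIV::'g set)) (\<lambda>x. \<Prod>e\<in>F. ind A (\<Sum>v\<in>e. x v)) - density A ^ card F\<bar>
     \<le> real (card F) * box_norm d (\<lambda>x. Gamma (d+1) A x - density A)"
  using fF FE
proof (induction F rule: finite_induct)
  case empty
  have "V \<rightarrow>\<^sub>E (UNIV::'g set) \<noteq> {}" by (simp add: PiE_eq_empty_iff)
  moreover have "finite (V \<rightarrow>\<^sub>E (UNIV::'g set))" using V by (intro finite_PiE) auto
  ultimately show ?case by (simp add: avg_const)
next
  case (insert e F)
  let ?\<beta> = "box_norm d (\<lambda>x. Gamma (d+1) A x - density A)"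
  let ?\<delta> = "density A"
  let ?P = "V \<rightarrow>\<^sub>E (UNIV::'g set)"
  have eE: "e \<in> E" using insert.prems by auto
  obtain S where S: "S \<subseteq> e" "card S = d+1" "\<forall>e'\<in>E. e' \<noteq> e \<longrightarrow> \<not> S \<subseteq> e'"
    using sim eE unfolding simple_hypergraph_def by blast
  have nS: "\<forall>f\<in>F. \<not> S \<subseteq> f" using S(3) insert.prems insert.hyps(2) by auto
  define X where "X = avg ?P (\<lambda>x. (ind A (\<Sum>v\<in>e. x v) - ?\<delta>) * (\<Prod>f\<in>F. ind A (\<Sum>v\<in>f. x v)))"
  define Y where "Y = avg ?P (\<lambda>x. \<Prod>f\<in>F. ind A (\<Sum>v\<in>f. x v))"
  have KX: "\<bar>X\<bar> \<le> ?\<beta>" unfolding X_def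
    by (rule key_lemma[OF V _ S(1) S(2) insert.hyps(1) nS]) (use EV eE in auto)
  have IH: "\<bar>Y - ?\<delta> ^ card F\<bar> \<le> real (card F) * ?\<beta>"
    unfolding Y_def using insert.IH insert.prems by auto
  have "avg ?P (\<lambda>x. \<Prod>f\<in>insert e F. ind A (\<Sum>v\<in>f. x v))
      = avg ?P (\<lambda>x. (ind A (\<Sum>v\<in>e. x v) - ?\<delta>) * (\<Prod>f\<in>F. ind A (\<Sum>v\<in>f. x v)) + ?\<delta> * (\<Prod>f\<in>F. ind A (\<Sum>v\<in>f. x v)))"
    by (rule avg_cong) (simp add: insert.hyps algebra_simps)
  also have "\<dots> = X + ?\<delta> * Y" unfolding X_def Y_def by (simp add: avg_add avg_cmult)
  finally have eq: "avg ?P (\<lambda>x. \<Prod>f\<in>insert e F. ind A (\<Sum>v\<in>f. x v)) = X + ?\<delta> * Y" .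
  have b0: "0 \<le> ?\<beta>" by (rule box_norm_nonneg)
  have d0: "0 \<le> ?\<delta>" "?\<delta> \<le> 1" by (rule density_bounds)+
  have "\<bar>X + ?\<delta> * Y - ?\<delta> ^ card (insert e F)\<bar> = \<bar>X + ?\<delta> * (Y - ?\<delta> ^ card F)\<bar>"
    using insert.hyps by (simp add: algebra_simps)
  also have "\<dots> \<le> \<bar>X\<bar> + ?\<delta> * \<bar>Y - ?\<delta> ^ card F\<bar>"
    using d0 by (simp add: abs_triangle_ineq[THEN order_trans] abs_mult)
  also have "\<dots> \<le> ?\<beta> + 1 * (real (card F) * ?\<beta>)"
    by (intro add_mono KX mult_mono d0 IH) (use b0 in auto)
  also have "\<dots> = real (card (insert e F)) * ?\<beta>" using insert.hyps by (simp add: algebra_simps)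
  finally show ?case unfolding eq .
qed

theorem mainTheorem5:
  fixes k d :: nat and A :: "'g::{finite,ab_group_add} set"
    and V :: "'v set" and E :: "'v set set"
  assumes "1 \<le> d" and "d < k"
    and "uniform_hypergraph k V E"
    and "simple_hypergraph (d+1) E"
  shows "\<bar>hom_density V E A - density A ^ card E\<bar>
           \<le> real (card E) * box_norm d (\<lambda>x. Gamma (d+1) A x - density A)
       \<and> real (card E) * box_norm d (\<lambda>x. Gamma (d+1) A x - density A)
           \<le> real (card E) * gowers_norm (d+1) (\<lambda>y. ind A y - density A)"
proof
  have V: "finite V" and EV: "\<forall>e\<in>E. e \<subseteq> V" using assms(3) unfolding uniform_hypergraph_def by auto
  have fE: "finite E" using V EV by (intro finite_subset[of E "Pow V"]) auto
  show "\<bar>hom_density V E A - density A ^ card E\<bar>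
           \<le> real (card E) * box_norm d (\<lambda>x. Gamma (d+1) A x - density A)"
    unfolding hom_density_def by (rule counting[OF V EV assms(4) fE subset_refl])
  have eq: "(\<lambda>x. Gamma (d+1) A x - density A) = (\<lambda>x. (\<lambda>y. ind A y - density A) (\<Sum>i\<in>{1..d+1}. x i))"
    unfolding Gamma_def ..
  show "real (card E) * box_norm d (\<lambda>x. Gamma (d+1) A x - density A)
           \<le> real (card E) * gowers_norm (d+1) (\<lambda>y. ind A y - density A)"
    unfolding eq by (rule mult_left_mono[OF box_le_gowers]) simp
qed

end
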